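(* Let $G$ be a finite, simple, connected graph of order at least three. If $\{u,v\}$ is a weak total metric basis of $G$ (i.e. a WTR-set of minimum cardinality, and this cardinality is $2$), then $u$ and $v$ are not adjacent.
   Context: $d(x,y)$ is the shortest-path distance. A set $W\subseteq V(G)$ is a resolving set if for every two distinct vertices $y,z$ of $G$ there is $x\in W$ with $d(y,x)\ne d(z,x)$. A set $W$ is a weak total resolving set (WTR-set) if $W$ is a resolving set and, for every $w\in W$ and every $x\in V(G)\setminus W$, there is $w'\in W\setminus\{w\}$ with $d(x,w')\ne d(w,w')$. A weak total metric basis is a WTR-set of minimum cardinality; this minimum is $\dim_{wt}(G)$. *)

theory Defs
  imports Main
begin

definition simple_graph :: "'a set \<Rightarrow> ('a \<Rightarrow> 'a \<Rightarrow> bool) \<Rightarrow> bool" where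
  "simple_graph V E \<longleftrightarrow> finite V \<and> (\<forall>x y. E x y \<longrightarrow> x \<in> V \<and> y \<in> V)
     \<and> (\<forall>x y. E x y \<longrightarrow> E y x) \<and> (\<forall>x. \<not> E x x)"

definition walk :: "'a set \<Rightarrow> ('a \<Rightarrow> 'a \<Rightarrow> bool) \<Rightarrow> 'a \<Rightarrow> 'a \<Rightarrow> nat \<Rightarrow> bool" where
  "walk V E x y n \<longleftrightarrow> (\<exists>xs. length xs = Suc n \<and> hd xs = x \<and> last xs = y
      \<and> set xs \<subseteq> V \<and> (\<forall>i < n. E (xs ! i) (xs ! Suc i)))"

definition connected_graph :: "'a set \<Rightarrow> ('a \<Rightarrow> 'a \<Rightarrow> bool) \<Rightarrow> bool" where
  "connected_graph V E \<longleftrightarrow> (\<forall>x\<in>V. \<forall>y\<in>V. \<exists>n. walk V E x y n)"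

definition dist :: "'a set \<Rightarrow> ('a \<Rightarrow> 'a \<Rightarrow> bool) \<Rightarrow> 'a \<Rightarrow> 'a \<Rightarrow> nat" where
  "dist V E x y = (LEAST n. walk V E x y n)"

definition resolving_set :: "'a set \<Rightarrow> ('a \<Rightarrow> 'a \<Rightarrow> bool) \<Rightarrow> 'a set \<Rightarrow> bool" where
  "resolving_set V E W \<longleftrightarrow> W \<subseteq> V \<and>
     (\<forall>y\<in>V. \<forall>z\<in>V. y \<noteq> z \<longrightarrow> (\<exists>x\<in>W. dist V E y x \<noteq> dist V E z x))"

definition wtr_set :: "'a set \<Rightarrow> ('a \<Rightarrow> 'a \<Rightarrow> bool) \<Rightarrow> 'a set \<Rightarrow> bool" where
  "wtr_set V E W \<longleftrightarrow> resolving_set V E W \<and>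
     (\<forall>w\<in>W. \<forall>x\<in>V - W. \<exists>w'\<in>W - {w}. dist V E x w' \<noteq> dist V E w w')"

definition weak_total_metric_basis :: "'a set \<Rightarrow> ('a \<Rightarrow> 'a \<Rightarrow> bool) \<Rightarrow> 'a set \<Rightarrow> bool" where
  "weak_total_metric_basis V E W \<longleftrightarrow> wtr_set V E W \<and>
     (\<forall>W'. wtr_set V E W' \<longrightarrow> card W \<le> card W')"

end

theory Submission
  imports Defs
begin

lemma dist_adj:
  assumes "simple_graph V E" "E a b"
  shows "dist V E a b = 1"
proof -
  have ab: "a \<in> V" "b \<in> V" "a \<noteq> b" using assms unfolding simple_graph_def by metis+
  have w1: "walk V E a b 1"
    unfolding walk_def by (rule exI[of _ "[a,b]"]) (use ab assms(2) in auto)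
  have nw0: "\<not> walk V E a b 0"
    unfolding walk_def using ab(3)
    by (auto simp: length_Suc_conv)
  show ?thesis unfolding dist_def
  proof (rule Least_equality)
    show "walk V E a b 1" by (rule w1)
  next
    fix y assume "walk V E a b y"
    with nw0 show "1 \<le> y" by (cases y) auto
  qed
qed

lemma walk_cross:
  assumes "walk V E x y n" "x \<notin> S" "y \<in> S"
  shows "\<exists>a b. a \<in> V \<and> a \<notin> S \<and> b \<in> S \<and> E a b"
proof -
  obtain xs where xs: "length xs = Suc n" "hd xs = x" "last xs = y" "set xs \<subseteq> V"
    "\<forall>i<n. E (xs ! i) (xs ! Suc i)" using assms(1) unfolding walk_def by blast
  show ?thesis
  proof (rule ccontr)
    assume H: "\<not> ?thesis"
    have "n > 0"
    proof (rule ccontr)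
      assume "\<not> n > 0"
      then have "n = 0" by simp
      then obtain z where "xs = [z]" using xs(1) by (auto simp: length_Suc_conv)
      then show False using xs assms by simp
    qed
    have all: "i \<le> n \<Longrightarrow> xs ! i \<notin> S" for i
    proof (induction i)
      case 0 then show ?case using xs(1,2) assms(2) by (metis hd_conv_nth list.size(3) nat.distinct(1))
    next
      case (Suc i)
      then have "xs ! i \<notin> S" "E (xs ! i) (xs ! Suc i)" using xs(5) by auto
      moreover have "xs ! i \<in> V" using xs(1,4) Suc.prems by (auto simp: nth_mem subsetD)
      ultimately show ?case using H \<open>n > 0\<close> by blast
    qed
    have "last xs = xs ! n" using xs(1) by (metis diff_Suc_1 last_conv_nth list.size(3) nat.distinct(1))
    then show False using all[of n] xs(3) assms(3) by simp
  qed
qed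

theorem proposition3:
  fixes V :: "'a set" and E :: "'a \<Rightarrow> 'a \<Rightarrow> bool" and u v :: 'a
  assumes "simple_graph V E" and "connected_graph V E" and "card V \<ge> 3"
    and "u \<noteq> v"
    and "weak_total_metric_basis V E {u, v}"
  shows "\<not> E u v"
proof
  assume euv: "E u v"
  have sg: "finite V" "\<forall>x y. E x y \<longrightarrow> E y x" using assms(1) unfolding simple_graph_def by auto
  have wtr: "wtr_set V E {u,v}" using assms(5) unfolding weak_total_metric_basis_def by blast
  have uvV: "u \<in> V" "v \<in> V" using assms(1) euv unfolding simple_graph_def by auto
  obtain x where x: "x \<in> V" "x \<notin> {u,v}"
  proof -
    have "card {u,v} < card V" using assms(3,4) by simp
    then have "\<not> V \<subseteq> {u,v}" using card_mono[of "{u,v}" V] by auto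
    then show ?thesis using that by blast
  qed
  obtain n where "walk V E x u n" using assms(2) x(1) uvV unfolding connected_graph_def by blast
  then obtain a b where ab: "a \<in> V" "a \<notin> {u,v}" "b \<in> {u,v}" "E a b"
    using walk_cross[of V E x u n "{u,v}"] x by blast
  have d1: "dist V E u v = 1" "dist V E v u = 1" using dist_adj[OF assms(1)] euv sg(2) by auto
  show False
  proof (cases "b = u")
    case True
    then have "dist V E a u = 1" using dist_adj[OF assms(1) ab(4)] by simp
    moreover have "\<exists>w'\<in>{u,v} - {v}. dist V E a w' \<noteq> dist V E v w'"
      using wtr ab unfolding wtr_set_def by blast
    ultimately show False using d1 assms(4) by auto
  next
    case False
    then have "b = v" using ab(3) by simp
    then have "dist V E a v = 1" using dist_adj[OF assms(1) ab(4)] by simp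
    moreover have "\<exists>w'\<in>{u,v} - {u}. dist V E a w' \<noteq> dist V E u w'"
      using wtr ab unfolding wtr_set_def by blast
    ultimately show False using d1 assms(4) by auto
  qed
qed

end
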